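(* Consider the fractionation problem with $N\ge 1$ fractions: minimize $Y_{N-1}^+$ over doses $d_0,\dots,d_{N-1}\ge 0$ subject to $\sum_{k=0}^{N-1}\mathrm{BED}_O(d_k)\le c$. Assume that $\phi(x)>0$ for all $x>0$. Then every optimal dose sequence satisfies the constraint with equality, i.e. $\sum_{k=0}^{N-1}\mathrm{BED}_O(d_k^* )=c$.
   Context: Model: Tumor parameters $\alpha_T>0$, $\beta_T>0$, $[\alpha/\beta]_T=\alpha_T/\beta_T$; organ-at-risk (OAR) parameter $[\alpha/\beta]_O>0$; sparing factor $0<\gamma<1$; OAR limit $c>0$. Define $\mathrm{BED}_T(d)=d\left(1+\frac{d}{[\alpha/\beta]_T}\right)$ and $\mathrm{BED}_O(d)=\gamma d\left(1+\frac{\gamma d}{[\alpha/\beta]_O}\right)$ for $d\ge0$. Tumor growth between doses follows $\frac{1}{x}\frac{dx}{dt}=\phi(x)$, where $\phi:(0,\infty)\to\mathbb{R}$ is continuous and non-increasing (standing assumption). Doses $d_0,\dots,d_{N-1}$ are delivered at times $0,1,\dots,N-1$ (days). Writing $Y=\ln(\text{number of tumor cells})/\alpha_T$, let $F$ be the map sending the value of $Y$ at time $t$ to its value at time $t+1$ under the growth ODE (no dose). With initial cell number $X_0>0$ and $Y_0^-=\ln(X_0)/\alpha_T$, the state evolves by $Y_0^+=Y_0^- -\mathrm{BED}_T(d_0)$, $Y_{i+1}^-=F(Y_i^+)$, $Y_{i+1}^+=Y_{i+1}^- - \mathrm{BED}_T(d_{i+1})$ for $i=0,\dots,N-2$. 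*)

theory Defs
  imports "HOL-Analysis.Analysis"
begin

definition BED_T :: "real \<Rightarrow> real \<Rightarrow> real" where
  "BED_T abT d = d * (1 + d / abT)"

definition BED_O :: "real \<Rightarrow> real \<Rightarrow> real \<Rightarrow> real" where
  "BED_O abO \<gamma> d = \<gamma> * d * (1 + \<gamma> * d / abO)"

definition growth_sol :: "(real \<Rightarrow> real) \<Rightarrow> real \<Rightarrow> (real \<Rightarrow> real) \<Rightarrow> bool" where
  "growth_sol \<phi> x0 x \<longleftrightarrow> x 0 = x0 \<and>
     (\<forall>t\<in>{0..1}. x t > 0 \<and> (x has_real_derivative (x t * \<phi> (x t))) (at t within {0..1}))"

text \<open>The one-day map F on Y = ln(cells)/alpha_T.\<close>
definition Fmap :: "real \<Rightarrow> (real \<Rightarrow> real) \<Rightarrow> real \<Rightarrow> real" where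
  "Fmap \<alpha>T \<phi> y = (THE z. \<exists>x. growth_sol \<phi> (exp (\<alpha>T * y)) x \<and> z = ln (x 1) / \<alpha>T)"

fun Yplus :: "real \<Rightarrow> real \<Rightarrow> (real \<Rightarrow> real) \<Rightarrow> real \<Rightarrow> (nat \<Rightarrow> real) \<Rightarrow> nat \<Rightarrow> real" where
  "Yplus \<alpha>T abT \<phi> X0 d 0 = ln X0 / \<alpha>T - BED_T abT (d 0)"
| "Yplus \<alpha>T abT \<phi> X0 d (Suc i) = Fmap \<alpha>T \<phi> (Yplus \<alpha>T abT \<phi> X0 d i) - BED_T abT (d (Suc i))"

definition feasible :: "real \<Rightarrow> real \<Rightarrow> real \<Rightarrow> nat \<Rightarrow> (nat \<Rightarrow> real) \<Rightarrow> bool" where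
  "feasible abO \<gamma> c N d \<longleftrightarrow> (\<forall>k<N. d k \<ge> 0) \<and> (\<Sum>k<N. BED_O abO \<gamma> (d k)) \<le> c"

definition optimal :: "real \<Rightarrow> real \<Rightarrow> (real \<Rightarrow> real) \<Rightarrow> real \<Rightarrow> real \<Rightarrow> real \<Rightarrow> real \<Rightarrow> nat \<Rightarrow> (nat \<Rightarrow> real) \<Rightarrow> bool" where
  "optimal \<alpha>T abT \<phi> X0 abO \<gamma> c N d \<longleftrightarrow> feasible abO \<gamma> c N d \<and>
     (\<forall>d'. feasible abO \<gamma> c N d' \<longrightarrow> Yplus \<alpha>T abT \<phi> X0 d (N - 1) \<le> Yplus \<alpha>T abT \<phi> X0 d' (N - 1))"

end

theory Submission
  imports Defs
begin

lemma Yplus_agree: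
  "(\<forall>j\<le>i. d j = d' j) \<Longrightarrow> Yplus aT abT \<phi> X0 d i = Yplus aT abT \<phi> X0 d' i"
  by (induction i) auto

lemma BED_T_strict:
  assumes "abT > 0" "0 \<le> x" "x < y"
  shows "BED_T abT x < BED_T abT y"
proof -
  have "x * x / abT \<le> y * y / abT"
    using assms by (intro divide_right_mono mult_mono) auto
  thus ?thesis using assms unfolding BED_T_def by (simp add: algebra_simps add_divide_distrib)
qed

lemma BED_O_step:
  assumes "abO > 0" "\<gamma> > 0" "0 \<le> x" "0 < e" "e \<le> 1"
  shows "BED_O abO \<gamma> (x + e) - BED_O abO \<gamma> x \<le> e * (\<gamma> * (1 + \<gamma> * (2*x+1) / abO))"
proof -
  have "BED_O abO \<gamma> (x + e) - BED_O abO \<gamma> x = e * (\<gamma> * (1 + \<gamma> * (2*x+e) / abO))"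
    unfolding BED_O_def using assms by (simp add: field_simps)
  also have "\<dots> \<le> e * (\<gamma> * (1 + \<gamma> * (2*x+1) / abO))"
    using assms by (intro mult_left_mono divide_right_mono add_left_mono) auto
  finally show ?thesis .
qed

theorem lemma1:
  fixes \<alpha>T \<beta>T abO \<gamma> c X0 :: real and \<phi> :: "real \<Rightarrow> real" and N :: nat and d :: "nat \<Rightarrow> real"
  assumes "\<alpha>T > 0" and "\<beta>T > 0" and "abO > 0" and "0 < \<gamma>" and "\<gamma> < 1" and "c > 0"
    and "X0 > 0" and "N \<ge> 1"
    and "continuous_on {0<..} \<phi>"
    and "\<And>x y. 0 < x \<Longrightarrow> x \<le> y \<Longrightarrow> \<phi> y \<le> \<phi> x"
    and "\<And>x. 0 < x \<Longrightarrow> \<phi> x > 0"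
    and "optimal \<alpha>T (\<alpha>T / \<beta>T) \<phi> X0 abO \<gamma> c N d"
  shows "(\<Sum>k<N. BED_O abO \<gamma> (d k)) = c"
proof (rule ccontr)
  assume ne: "(\<Sum>k<N. BED_O abO \<gamma> (d k)) \<noteq> c"
  obtain m where N: "N = Suc m" using assms(8) by (cases N) auto
  have feas: "feasible abO \<gamma> c N d" and opt: "\<And>d'. feasible abO \<gamma> c N d' \<Longrightarrow>
      Yplus \<alpha>T (\<alpha>T / \<beta>T) \<phi> X0 d (N - 1) \<le> Yplus \<alpha>T (\<alpha>T / \<beta>T) \<phi> X0 d' (N - 1)"
    using assms(12) unfolding optimal_def by auto
  define S where "S = (\<Sum>k<m. BED_O abO \<gamma> (d k))"
  define x where "x = d m"
  have x0: "0 \<le> x" using feas N unfolding feasible_def x_def by auto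
  have slt: "S + BED_O abO \<gamma> x < c" using feas ne N unfolding feasible_def S_def x_def by auto
  define K where "K = \<gamma> * (1 + \<gamma> * (2*x+1) / abO)"
  have Kpos: "K > 0" unfolding K_def using assms x0 by (intro mult_pos_pos) (auto intro: add_pos_nonneg)
  define e where "e = min 1 ((c - S - BED_O abO \<gamma> x) / K)"
  have e0: "0 < e" "e \<le> 1" unfolding e_def using slt Kpos by auto
  have "e * K \<le> c - S - BED_O abO \<gamma> x"
    unfolding e_def using Kpos slt by (simp add: min_def field_simps)
  hence step: "S + BED_O abO \<gamma> (x + e) \<le> c"
    using BED_O_step[OF assms(3) assms(4) x0 e0] unfolding K_def by (simp add: mult.commute)
  define d' where "d' = d(m := x + e)"
  have "feasible abO \<gamma> c N d'"
    unfolding feasible_def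
  proof
    show "\<forall>k<N. 0 \<le> d' k" using feas x0 e0 unfolding feasible_def d'_def by auto
    have "(\<Sum>k<N. BED_O abO \<gamma> (d' k)) = S + BED_O abO \<gamma> (x + e)"
      unfolding N S_def d'_def by (simp add: lessThan_Suc)
    thus "(\<Sum>k<N. BED_O abO \<gamma> (d' k)) \<le> c" using step by simp
  qed
  from opt[OF this] have le: "Yplus \<alpha>T (\<alpha>T / \<beta>T) \<phi> X0 d m \<le> Yplus \<alpha>T (\<alpha>T / \<beta>T) \<phi> X0 d' m"
    using N by simp
  have abT: "\<alpha>T / \<beta>T > 0" using assms by simp
  have bt: "BED_T (\<alpha>T / \<beta>T) x < BED_T (\<alpha>T / \<beta>T) (x + e)"
    by (rule BED_T_strict[OF abT x0]) (use e0 in simp)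
  have "Yplus \<alpha>T (\<alpha>T / \<beta>T) \<phi> X0 d' m < Yplus \<alpha>T (\<alpha>T / \<beta>T) \<phi> X0 d m"
  proof (cases m)
    case 0 thus ?thesis using bt unfolding d'_def x_def by simp
  next
    case (Suc k)
    have "Yplus \<alpha>T (\<alpha>T / \<beta>T) \<phi> X0 d k = Yplus \<alpha>T (\<alpha>T / \<beta>T) \<phi> X0 d' k"
      by (rule Yplus_agree) (auto simp: d'_def Suc)
    thus ?thesis using bt unfolding Suc d'_def x_def by (simp add: Suc)
  qed
  thus False using le by simp
qed

end
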